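(* Let $H\ge1$, $c_a\ge0$, $c_R\ge0$, and for $h=1,\dots,H$ let $p_{h,0},p_{h,1}\in[0,1]$ with $p_{h,0}\ge p_{h,1}$. Define $V_{H+1}=0$ and, for $h=H,\dots,1$, $V_h=\min\{c_a+p_{h,1}c_R+(1-p_{h,1})V_{h+1},\ p_{h,0}c_R+(1-p_{h,0})V_{h+1}\}$. Then for all $1\le h\le H$, $$\Big(1-\prod_{i=h}^H(1-p_{i,1})\Big)c_R\le V_h\le\Big(1-\prod_{i=h}^H(1-p_{i,0})\Big)c_R.$$ *)

theory Defs
  imports Complex_Main
begin

function Vval :: "nat \<Rightarrow> real \<Rightarrow> real \<Rightarrow> (nat \<Rightarrow> real) \<Rightarrow> (nat \<Rightarrow> real) \<Rightarrow> nat \<Rightarrow> real" where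
  "Vval H ca cR p0 p1 h =
     (if H < h then 0
      else min (ca + p1 h * cR + (1 - p1 h) * Vval H ca cR p0 p1 (Suc h))
               (p0 h * cR + (1 - p0 h) * Vval H ca cR p0 p1 (Suc h)))"
  by pat_completeness auto
termination by (relation "measure (\<lambda>(H, ca, cR, p0, p1, h). Suc H - h)") auto

end

theory Submission
  imports Defs
begin

declare Vval.simps[simp del]

lemma V0: "H < h \<Longrightarrow> Vval H ca cR p0 p1 h = 0"
  by (subst Vval.simps) simp

lemma aux:
  fixes H :: nat and ca cR :: real and p0 p1 :: "nat \<Rightarrow> real"
  assumes "ca \<ge> 0" and "cR \<ge> 0"
    and a0: "\<And>h. 1 \<le> h \<Longrightarrow> h \<le> H \<Longrightarrow> 0 \<le> p0 h \<and> p0 h \<le> 1"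
    and a1: "\<And>h. 1 \<le> h \<Longrightarrow> h \<le> H \<Longrightarrow> 0 \<le> p1 h \<and> p1 h \<le> 1"
    and a2: "\<And>h. 1 \<le> h \<Longrightarrow> h \<le> H \<Longrightarrow> p0 h \<ge> p1 h"
  shows "1 \<le> h \<Longrightarrow> h \<le> Suc H \<Longrightarrow>
           (1 - (\<Prod>i=h..H. 1 - p1 i)) * cR \<le> Vval H ca cR p0 p1 h \<and>
           Vval H ca cR p0 p1 h \<le> (1 - (\<Prod>i=h..H. 1 - p0 i)) * cR
           \<and> (\<Prod>i=h..H. 1 - p0 i) \<ge> 0"
proof (induction "Suc H - h" arbitrary: h)
  case 0 then have "H < h" by simp
  then show ?case by (simp add: V0)
next
  case (Suc k)
  show ?case
  proof (cases "h = Suc H")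
    case True then have "H < h" by simp
    then show ?thesis by (simp add: V0)
  next
    case False
    hence hH: "h \<le> H" using Suc by simp
    have IH: "(1 - (\<Prod>i=Suc h..H. 1 - p1 i)) * cR \<le> Vval H ca cR p0 p1 (Suc h) \<and>
           Vval H ca cR p0 p1 (Suc h) \<le> (1 - (\<Prod>i=Suc h..H. 1 - p0 i)) * cR
           \<and> (\<Prod>i=Suc h..H. 1 - p0 i) \<ge> 0"
      using Suc hH by simp
    define V where "V = Vval H ca cR p0 p1 (Suc h)"
    define Q0 where "Q0 = (\<Prod>i=Suc h..H. 1 - p0 i)"
    define Q1 where "Q1 = (\<Prod>i=Suc h..H. 1 - p1 i)"
    have P0: "(\<Prod>i=h..H. 1 - p0 i) = (1 - p0 h) * Q0"
      unfolding Q0_def using hH by (simp add: prod.atLeast_Suc_atMost)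
    have P1: "(\<Prod>i=h..H. 1 - p1 i) = (1 - p1 h) * Q1"
      unfolding Q1_def using hH by (simp add: prod.atLeast_Suc_atMost)
    have Vh: "Vval H ca cR p0 p1 h = min (ca + p1 h * cR + (1 - p1 h) * V) (p0 h * cR + (1 - p0 h) * V)"
      using hH V_def by (subst Vval.simps) simp
    have b0: "0 \<le> p0 h" "p0 h \<le> 1" using a0[of h] Suc hH by auto
    have b1: "0 \<le> p1 h" "p1 h \<le> 1" using a1[of h] Suc hH by auto
    have b2: "p1 h \<le> p0 h" using a2[of h] Suc hH by auto
    have L: "(1 - Q1) * cR \<le> V" and U: "V \<le> (1 - Q0) * cR" and Q0p: "Q0 \<ge> 0"
      using IH unfolding V_def Q0_def Q1_def by auto
    have VcR: "V \<le> cR" proof -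
      have "Q0 * cR \<ge> 0" using Q0p \<open>cR \<ge> 0\<close> by simp
      thus ?thesis using U by (simp add: algebra_simps)
    qed
    have t1: "(1 - (1 - p1 h) * Q1) * cR \<le> ca + p1 h * cR + (1 - p1 h) * V"
    proof -
      have "(1 - p1 h) * ((1 - Q1) * cR) \<le> (1 - p1 h) * V" using L b1 by (simp add: mult_left_mono)
      thus ?thesis using \<open>ca \<ge> 0\<close> by (simp add: algebra_simps)
    qed
    have t2: "(1 - (1 - p1 h) * Q1) * cR \<le> p0 h * cR + (1 - p0 h) * V"
    proof -
      have "(1 - p1 h) * ((1 - Q1) * cR) \<le> (1 - p1 h) * V" using L b1 by (simp add: mult_left_mono)
      moreover have "p1 h * (cR - V) \<le> p0 h * (cR - V)" using b2 VcR by (simp add: mult_right_mono)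
      ultimately show ?thesis by (simp add: algebra_simps)
    qed
    have t3: "p0 h * cR + (1 - p0 h) * V \<le> (1 - (1 - p0 h) * Q0) * cR"
    proof -
      have "(1 - p0 h) * V \<le> (1 - p0 h) * ((1 - Q0) * cR)" using U b0 by (simp add: mult_left_mono)
      thus ?thesis by (simp add: algebra_simps)
    qed
    have "(1 - p0 h) * Q0 \<ge> 0" using Q0p b0 by simp
    then show ?thesis unfolding P0 P1 Vh using t1 t2 t3 by (simp only: min.bounded_iff min_le_iff_disj) simp
  qed
qed

theorem mainTheorem4:
  fixes H :: nat and ca cR :: real and p0 p1 :: "nat \<Rightarrow> real"
  assumes "H \<ge> 1" and "ca \<ge> 0" and "cR \<ge> 0"
    and "\<And>h. 1 \<le> h \<Longrightarrow> h \<le> H \<Longrightarrow> 0 \<le> p0 h \<and> p0 h \<le> 1"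
    and "\<And>h. 1 \<le> h \<Longrightarrow> h \<le> H \<Longrightarrow> 0 \<le> p1 h \<and> p1 h \<le> 1"
    and "\<And>h. 1 \<le> h \<Longrightarrow> h \<le> H \<Longrightarrow> p0 h \<ge> p1 h"
  shows "\<forall>h. 1 \<le> h \<and> h \<le> H \<longrightarrow>
           (1 - (\<Prod>i=h..H. 1 - p1 i)) * cR \<le> Vval H ca cR p0 p1 h \<and>
           Vval H ca cR p0 p1 h \<le> (1 - (\<Prod>i=h..H. 1 - p0 i)) * cR"
  using aux[OF assms(2-6)] by auto

end
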